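(* Let $S\subseteq\mathbb{R}^n$ be closed, $\bar x\in S$ and $d\in T_S(\bar x)$. Then $$N_{T_S^2(\bar x;d)}(w)\subseteq N_S(\bar x;d)\ \ \forall w\in T_S^2(\bar x;d),\qquad N_{T_S^{''}(\bar x;d)}(w)\subseteq N_S(\bar x;d)\ \ \forall w\in T_S^{''}(\bar x;d).$$
   Context: $T_S(\bar x)$ is the Bouligand tangent cone. $T_S^2(\bar x;d):=\{w\mid \exists t_k\downarrow 0,\ w_k\to w,\ \bar x+t_kd+\tfrac12 t_k^2w_k\in S\}$; $T_S^{''}(\bar x;d):=\{w\mid \exists (t_k,r_k)\downarrow(0,0),\ w_k\to w,\ t_k/r_k\to0,\ \bar x+t_kd+\tfrac12 t_kr_kw_k\in S\}$. For a closed set $A$, $\hat N_A(x)$ is the Fréchet normal cone ($\hat N_A(x)=\emptyset$ if $x\notin A$), $N_A(x)=\limsup_{x'\to_A x}\hat N_A(x')$ is the limiting normal cone. The directional limiting normal cone is $N_S(\bar x;d):=\limsup_{t\downarrow0,\,d'\to d}\hat N_S(\bar x+td')$ (Painlevé–Kuratowski outer limit). *)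

theory Defs
  imports "HOL-Analysis.Analysis"
begin

definition tangent_cone :: "'a::euclidean_space set \<Rightarrow> 'a \<Rightarrow> 'a set" where
  "tangent_cone S x = {d. \<exists>t dk. (\<forall>k. t k > 0) \<and> t \<longlonglongrightarrow> 0 \<and> dk \<longlonglongrightarrow> d \<and>
       (\<forall>k. x + t k *\<^sub>R dk k \<in> S)}"

definition second_tangent_set :: "'a::euclidean_space set \<Rightarrow> 'a \<Rightarrow> 'a \<Rightarrow> 'a set" where
  "second_tangent_set S x d = {w. \<exists>t wk. (\<forall>k. t k > 0) \<and> t \<longlonglongrightarrow> 0 \<and> wk \<longlonglongrightarrow> w \<and>
       (\<forall>k. x + t k *\<^sub>R d + ((1/2) * (t k)\<^sup>2) *\<^sub>R wk k \<in> S)}"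

definition asymptotic_second_tangent_cone :: "'a::euclidean_space set \<Rightarrow> 'a \<Rightarrow> 'a \<Rightarrow> 'a set" where
  "asymptotic_second_tangent_cone S x d = {w. \<exists>t r wk. (\<forall>k. t k > 0 \<and> r k > 0) \<and>
       t \<longlonglongrightarrow> 0 \<and> r \<longlonglongrightarrow> 0 \<and> wk \<longlonglongrightarrow> w \<and> (\<lambda>k. t k / r k) \<longlonglongrightarrow> 0 \<and>
       (\<forall>k. x + t k *\<^sub>R d + ((1/2) * t k * r k) *\<^sub>R wk k \<in> S)}"

definition frechet_normal_cone :: "'a::euclidean_space set \<Rightarrow> 'a \<Rightarrow> 'a set" where
  "frechet_normal_cone A x = (if x \<in> A then {v. \<forall>\<epsilon>>0. \<exists>\<delta>>0. \<forall>y\<in>A. norm (y - x) < \<delta> \<longrightarrow>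
       inner v (y - x) \<le> \<epsilon> * norm (y - x)} else {})"

definition limiting_normal_cone :: "'a::euclidean_space set \<Rightarrow> 'a \<Rightarrow> 'a set" where
  "limiting_normal_cone A x = {v. \<exists>xk vk. (\<forall>k. xk k \<in> A \<and> vk k \<in> frechet_normal_cone A (xk k)) \<and>
       xk \<longlonglongrightarrow> x \<and> vk \<longlonglongrightarrow> v}"

definition directional_normal_cone :: "'a::euclidean_space set \<Rightarrow> 'a \<Rightarrow> 'a \<Rightarrow> 'a set" where
  "directional_normal_cone S x d = {v. \<exists>t dk vk. (\<forall>k. t k > 0) \<and> t \<longlonglongrightarrow> 0 \<and> dk \<longlonglongrightarrow> d \<and>
       vk \<longlonglongrightarrow> v \<and> (\<forall>k. vk k \<in> frechet_normal_cone S (x + t k *\<^sub>R dk k))}"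

end

theory Submission
  imports Defs
begin

lemma frechet_scale:
  fixes S :: "'a::euclidean_space set"
  assumes c: "c > 0" and u: "u \<in> frechet_normal_cone ((\<lambda>y. b + c *\<^sub>R y) -` S) p"
  shows "u \<in> frechet_normal_cone S (b + c *\<^sub>R p)"
proof -
  have pS: "b + c *\<^sub>R p \<in> S" and fr: "\<forall>e>0. \<exists>\<delta>>0. \<forall>y\<in>((\<lambda>y. b + c *\<^sub>R y) -` S). norm (y - p) < \<delta> \<longrightarrow>
       inner u (y - p) \<le> e * norm (y - p)"
    using u unfolding frechet_normal_cone_def by (auto split: if_splits)
  show ?thesis
    unfolding frechet_normal_cone_def
  proof (simp add: pS, intro allI impI)
    fix e :: real assume e: "e > 0"
    obtain \<delta> where d: "\<delta> > 0" and hd: "\<forall>y\<in>((\<lambda>y. b + c *\<^sub>R y) -` S). norm (y - p) < \<delta> \<longrightarrow>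
       inner u (y - p) \<le> e * norm (y - p)" using fr e by blast
    show "\<exists>\<delta>>0. \<forall>y\<in>S. norm (y - (b + c *\<^sub>R p)) < \<delta> \<longrightarrow> inner u (y - (b + c *\<^sub>R p)) \<le> e * norm (y - (b + c *\<^sub>R p))"
    proof (intro exI[of _ "c * \<delta>"] conjI ballI impI)
      show "0 < c * \<delta>" using c d by simp
      fix z assume z: "z \<in> S" and nz: "norm (z - (b + c *\<^sub>R p)) < c * \<delta>"
      define y where "y = (1/c) *\<^sub>R (z - b)"
      have zy: "z - (b + c *\<^sub>R p) = c *\<^sub>R (y - p)" using c by (simp add: y_def algebra_simps)
      have "b + c *\<^sub>R y = z" using c by (simp add: y_def)
      hence yS: "y \<in> ((\<lambda>y. b + c *\<^sub>R y) -` S)" using z by simp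
      have "norm (y - p) < \<delta>" using nz c zy by (simp add: mult_less_cancel_left_pos)
      hence "inner u (y - p) \<le> e * norm (y - p)" using hd yS by blast
      hence "c * inner u (y - p) \<le> c * (e * norm (y - p))" using c by simp
      moreover have "inner u (z - (b + c *\<^sub>R p)) = c * inner u (y - p)" using zy by simp
      moreover have "norm (z - (b + c *\<^sub>R p)) = c * norm (y - p)" using zy c by simp
      ultimately show "inner u (z - (b + c *\<^sub>R p)) \<le> e * norm (z - (b + c *\<^sub>R p))"
        by (simp add: algebra_simps)
    qed
  qed
qed

lemma proximal_frechet:
  fixes C :: "'a::euclidean_space set"
  assumes pC: "p \<in> C" and near: "\<forall>y\<in>C. dist q p \<le> dist q y" and tau: "\<tau> > 0"
  shows "(1/\<tau>) *\<^sub>R (q - p) \<in> frechet_normal_cone C p"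
  unfolding frechet_normal_cone_def
proof (simp add: pC, intro allI impI)
  fix e :: real assume e: "e > 0"
  show "\<exists>\<delta>>0. \<forall>y\<in>C. norm (y - p) < \<delta> \<longrightarrow> inner (q - p) (y - p) / \<tau> \<le> e * norm (y - p)"
  proof (intro exI[of _ "2*\<tau>*e"] conjI ballI impI)
    show "0 < 2*\<tau>*e" using tau e by simp
    fix y assume y: "y \<in> C" and ny: "norm (y - p) < 2*\<tau>*e"
    have "dist q p \<le> dist q y" using near y by blast
    hence "norm (q - p) \<le> norm (q - y)" by (simp add: dist_norm)
    hence "norm (q - p)^2 \<le> norm (q - y)^2" by (rule power_mono[OF _ norm_ge_zero])
    moreover have "(q - p) - (y - p) = q - y" by simp
    ultimately have n2: "norm (q - p)^2 \<le> norm ((q - p) - (y - p))^2" by simp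
    have aux: "X = (A + B - C)/2 \<Longrightarrow> A \<le> C \<Longrightarrow> 2*X \<le> B" for X A B C :: real
      by (simp add: field_simps)
    have "2 * inner (q - p) (y - p) \<le> norm (y - p)^2"
      by (rule aux[OF dot_norm_neg[of "q - p" "y - p"] n2])
    also have "\<dots> \<le> 2*\<tau>*e * norm (y - p)"
    proof -
      have "norm (y - p) * norm (y - p) \<le> (2*\<tau>*e) * norm (y - p)"
        by (rule mult_right_mono) (use ny in auto)
      thus ?thesis by (simp add: power2_eq_square)
    qed
    finally have "inner (q - p) (y - p) \<le> \<tau> * (e * norm (y - p))" by simp
    thus "inner (q - p) (y - p) / \<tau> \<le> e * norm (y - p)" using tau by (simp add: pos_divide_le_eq algebra_simps)
  qed
qed


definition gen_set :: "'a::euclidean_space set \<Rightarrow> 'a \<Rightarrow> 'a \<Rightarrow> ((nat \<Rightarrow> real) \<times> (nat \<Rightarrow> real)) set \<Rightarrow> 'a set" where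
  "gen_set S x d G = {w. \<exists>t s wk. (t, s) \<in> G \<and> wk \<longlonglongrightarrow> w \<and>
      (\<forall>k. x + t k *\<^sub>R d + (t k * s k) *\<^sub>R wk k \<in> S)}"

definition goodG :: "((nat \<Rightarrow> real) \<times> (nat \<Rightarrow> real)) set \<Rightarrow> bool" where
  "goodG G \<longleftrightarrow> (\<forall>t s. (t, s) \<in> G \<longrightarrow> (\<forall>k. t k > 0 \<and> s k > 0) \<and> t \<longlonglongrightarrow> 0 \<and> s \<longlonglongrightarrow> 0)
     \<and> (\<forall>t s r. (t, s) \<in> G \<longrightarrow> strict_mono r \<longrightarrow> (t \<circ> r, s \<circ> r) \<in> G)"

lemma approx:
  fixes S :: "'a::euclidean_space set"
  assumes S: "closed S" and G: "goodG G"
    and v: "v \<in> frechet_normal_cone (gen_set S x d G) w"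
    and eps: "\<epsilon> > 0" and eta: "\<eta> > 0"
  shows "\<exists>t d' u. 0 < t \<and> t < \<eta> \<and> norm (d' - d) < \<epsilon> \<and> norm (u - v) < \<epsilon> \<and>
     u \<in> frechet_normal_cone S (x + t *\<^sub>R d')"
proof -
  let ?A = "gen_set S x d G"
  have wA: "w \<in> ?A" and fr: "\<forall>e>0. \<exists>\<delta>>0. \<forall>y\<in>?A. norm (y - w) < \<delta> \<longrightarrow>
       inner v (y - w) \<le> e * norm (y - w)"
    using v unfolding frechet_normal_cone_def by (auto split: if_splits)
  obtain T \<sigma> wk where TG: "(T, \<sigma>) \<in> G" and wk: "wk \<longlonglongrightarrow> w"
    and mem: "\<forall>k. x + T k *\<^sub>R d + (T k * \<sigma> k) *\<^sub>R wk k \<in> S"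
    using wA unfolding gen_set_def by blast
  have Tpos: "\<forall>k. T k > 0 \<and> \<sigma> k > 0" and T0: "T \<longlonglongrightarrow> 0" and s0: "\<sigma> \<longlonglongrightarrow> 0"
    using G TG unfolding goodG_def by blast+
  have e3: "\<epsilon>/3 > 0" using eps by simp
  obtain \<delta> where dpos: "\<delta> > 0" and hd: "\<forall>y\<in>?A. norm (y - w) < \<delta> \<longrightarrow>
       inner v (y - w) \<le> (\<epsilon>/3) * norm (y - w)"
    using fr e3 by blast
  define c where "c = 2 * (norm v + 1)"
  define \<tau> where "\<tau> = \<delta> / c"
  have den: "0 < c" unfolding c_def by (smt (verit) norm_ge_zero)
  have taupos: "\<tau> > 0" unfolding \<tau>_def using dpos den by (rule divide_pos_pos)
  have tau_eq: "\<tau> * c = \<delta>" using den by (simp add: \<tau>_def)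
  have "\<tau> * c = 2 * \<tau> * norm v + 2 * \<tau>" by (simp add: c_def algebra_simps)
  hence tau_lt: "2 * \<tau> * norm v < \<delta>" using tau_eq taupos by linarith
  define q where "q = w + \<tau> *\<^sub>R v"
  define Sk where "Sk k = (\<lambda>y. (x + T k *\<^sub>R d) + (T k * \<sigma> k) *\<^sub>R y) -` S" for k
  have closedSk: "closed (Sk k)" for k
    unfolding Sk_def by (rule continuous_closed_vimage[OF S]) (intro continuous_intros)
  have wkS: "wk k \<in> Sk k" for k using mem by (simp add: Sk_def)
  have "\<exists>p. p \<in> Sk k \<and> (\<forall>y\<in>Sk k. dist q p \<le> dist q y)" for k
  proof -
    have ne: "Sk k \<noteq> {}" using wkS by blast
    obtain p where "p \<in> Sk k" "\<And>y. y \<in> Sk k \<Longrightarrow> dist q p \<le> dist q y"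
      using distance_attains_inf[OF closedSk[of k] ne, of q] by blast
    thus ?thesis by blast
  qed
  then obtain p where pS: "\<And>k. p k \<in> Sk k" and pnear: "\<And>k. \<forall>y\<in>Sk k. dist q (p k) \<le> dist q y"
    by metis
  have pw: "dist q (p k) \<le> dist q (wk k)" for k using pnear wkS by blast
  obtain B where B: "\<forall>y\<in>range wk. dist q y \<le> B"
    using convergent_imp_bounded[OF wk] bounded_any_center by metis
  have pc: "\<forall>k. p k \<in> cball q B"
  proof
    fix k
    have "dist q (wk k) \<le> B" using B by blast
    thus "p k \<in> cball q B" using pw[of k] by (simp add: mem_cball)
  qed
  obtain pb r where rm: "strict_mono r" and pr: "(p \<circ> r) \<longlonglongrightarrow> pb"
    using seq_compactE[OF compact_imp_seq_compact[OF compact_cball] pc] by metis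
  have prr: "(\<lambda>k. p (r k)) \<longlonglongrightarrow> pb" using pr by (simp add: comp_def)
  have pbA: "pb \<in> ?A"
    unfolding gen_set_def
  proof (intro CollectI exI conjI)
    show "(T \<circ> r, \<sigma> \<circ> r) \<in> G" using G TG rm unfolding goodG_def by blast
    show "(p \<circ> r) \<longlonglongrightarrow> pb" by (rule pr)
    show "\<forall>k. x + (T \<circ> r) k *\<^sub>R d + ((T \<circ> r) k * (\<sigma> \<circ> r) k) *\<^sub>R (p \<circ> r) k \<in> S"
    proof
      fix k
      have "p (r k) \<in> Sk (r k)" by (rule pS)
      thus "x + (T \<circ> r) k *\<^sub>R d + ((T \<circ> r) k * (\<sigma> \<circ> r) k) *\<^sub>R (p \<circ> r) k \<in> S"
        by (simp add: Sk_def)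
    qed
  qed
  have dqw: "dist q w = \<tau> * norm v" using taupos by (simp add: q_def dist_norm)
  have dq: "dist q pb \<le> \<tau> * norm v"
  proof -
    have l1: "(\<lambda>k. dist q (p (r k))) \<longlonglongrightarrow> dist q pb" by (intro tendsto_intros prr)
    have wrr: "(\<lambda>k. wk (r k)) \<longlonglongrightarrow> w" using LIMSEQ_subseq_LIMSEQ[OF wk rm] by (simp add: comp_def)
    have l2: "(\<lambda>k. dist q (wk (r k))) \<longlonglongrightarrow> dist q w"
      by (intro tendsto_intros wrr)
    have "dist q pb \<le> dist q w"
      by (rule LIMSEQ_le[OF l1 l2]) (use pw in blast)
    thus ?thesis using dqw by simp
  qed
  have npw: "norm (pb - w) < \<delta>"
  proof -
    have "dist pb w \<le> dist pb q + dist q w" by (rule dist_triangle)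
    also have "\<dots> \<le> 2 * \<tau> * norm v" using dq dqw by (simp add: dist_commute)
    finally show ?thesis using tau_lt by (simp add: dist_norm)
  qed
  define a where "a = pb - w"
  have va: "inner v a \<le> (\<epsilon>/3) * norm a" using hd pbA npw unfolding a_def by blast
  have qpb: "q - pb = \<tau> *\<^sub>R v - a" by (simp add: q_def a_def algebra_simps)
  have "norm (\<tau> *\<^sub>R v - a) \<le> \<tau> * norm v" using dq qpb by (simp add: dist_norm)
  hence n1: "norm (\<tau> *\<^sub>R v - a)^2 \<le> (\<tau> * norm v)^2" by (rule power_mono[OF _ norm_ge_zero])
  have ntv: "norm (\<tau> *\<^sub>R v) = \<tau> * norm v" using taupos by simp
  have itv: "inner (\<tau> *\<^sub>R v) a = \<tau> * inner v a" by simp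
  have "norm (\<tau> *\<^sub>R v - a)^2 = (\<tau> * norm v)^2 - 2 * (\<tau> * inner v a) + norm a ^2"
  proof -
    have aux: "X = (Y + Z - W)/2 \<Longrightarrow> W = Y - 2*X + Z" for X Y Z W :: real by (simp add: field_simps)
    show ?thesis by (rule aux[OF dot_norm_neg[of "\<tau> *\<^sub>R v" a, unfolded ntv itv]])
  qed
  hence "norm a ^ 2 \<le> 2 * (\<tau> * inner v a)" using n1 by (smt (verit))
  also have "\<dots> \<le> 2 * (\<tau> * ((\<epsilon>/3) * norm a))" using va taupos by simp
  finally have sq: "norm a * norm a \<le> (2 * \<tau> * (\<epsilon>/3)) * norm a"
    by (simp add: power2_eq_square algebra_simps)
  have na: "norm a \<le> 2 * \<tau> * (\<epsilon>/3)"
  proof (cases "norm a = 0")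
    case True thus ?thesis using taupos eps by simp
  next
    case False
    hence "norm a > 0" by simp
    thus ?thesis using sq by (rule mult_right_le_imp_le[rotated])
  qed
  define L where "L = (1/\<tau>) *\<^sub>R (q - pb)"
  have Lv: "norm (L - v) \<le> 2 * (\<epsilon>/3)"
  proof -
    have "L = v - (1/\<tau>) *\<^sub>R a" using taupos by (simp add: L_def qpb scaleR_right_diff_distrib)
    hence "norm (L - v) = norm a / \<tau>" using taupos by simp
    also have "\<dots> \<le> 2 * (\<epsilon>/3)" using na taupos by (simp add: pos_divide_le_eq algebra_simps)
    finally show ?thesis .
  qed
  have uL: "(\<lambda>k. (1/\<tau>) *\<^sub>R (q - p (r k))) \<longlonglongrightarrow> L"
    unfolding L_def by (intro tendsto_intros prr)
  have srr: "(\<lambda>k. \<sigma> (r k)) \<longlonglongrightarrow> 0" using LIMSEQ_subseq_LIMSEQ[OF s0 rm] by (simp add: comp_def)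
  have dL0: "(\<lambda>k. d + \<sigma> (r k) *\<^sub>R p (r k)) \<longlonglongrightarrow> d + 0 *\<^sub>R pb"
    by (intro tendsto_intros srr prr)
  hence dL: "(\<lambda>k. d + \<sigma> (r k) *\<^sub>R p (r k)) \<longlonglongrightarrow> d" by simp
  have tL: "(\<lambda>k. T (r k)) \<longlonglongrightarrow> 0" using LIMSEQ_subseq_LIMSEQ[OF T0 rm] by (simp add: comp_def)
  have ev1: "\<forall>\<^sub>F k in sequentially. dist ((1/\<tau>) *\<^sub>R (q - p (r k))) L < \<epsilon>/3"
    using uL[unfolded tendsto_iff, rule_format, OF e3] .
  have ev2: "\<forall>\<^sub>F k in sequentially. dist (d + \<sigma> (r k) *\<^sub>R p (r k)) d < \<epsilon>"
    using dL[unfolded tendsto_iff, rule_format, OF eps] .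
  have ev3: "\<forall>\<^sub>F k in sequentially. dist (T (r k)) 0 < \<eta>"
    using tL[unfolded tendsto_iff, rule_format, OF eta] .
  obtain N where "\<forall>k\<ge>N. dist ((1/\<tau>) *\<^sub>R (q - p (r k))) L < \<epsilon>/3 \<and>
      dist (d + \<sigma> (r k) *\<^sub>R p (r k)) d < \<epsilon> \<and> dist (T (r k)) 0 < \<eta>"
    using eventually_conj[OF ev1 eventually_conj[OF ev2 ev3]] unfolding eventually_sequentially by blast
  then obtain k where k1: "dist ((1/\<tau>) *\<^sub>R (q - p (r k))) L < \<epsilon>/3"
    and k2: "dist (d + \<sigma> (r k) *\<^sub>R p (r k)) d < \<epsilon>" and k3: "dist (T (r k)) 0 < \<eta>"
    by blast
  define u where "u = (1/\<tau>) *\<^sub>R (q - p (r k))"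
  have "norm (u - v) \<le> norm (u - L) + norm (L - v)" using norm_triangle_ineq[of "u - L" "L - v"] by simp
  hence uv: "norm (u - v) < \<epsilon>" using k1 Lv by (simp add: u_def dist_norm)
  have un: "u \<in> frechet_normal_cone (Sk (r k)) (p (r k))"
    unfolding u_def by (rule proximal_frechet[OF pS pnear taupos])
  have un': "u \<in> frechet_normal_cone ((\<lambda>y. (x + T (r k) *\<^sub>R d) + (T (r k) * \<sigma> (r k)) *\<^sub>R y) -` S) (p (r k))"
    using un unfolding Sk_def .
  have cpos: "T (r k) * \<sigma> (r k) > 0" using Tpos by simp
  have u1: "u \<in> frechet_normal_cone S ((x + T (r k) *\<^sub>R d) + (T (r k) * \<sigma> (r k)) *\<^sub>R p (r k))"
    by (rule frechet_scale[OF cpos un'])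
  have eq: "(x + T (r k) *\<^sub>R d) + (T (r k) * \<sigma> (r k)) *\<^sub>R p (r k)
      = x + T (r k) *\<^sub>R (d + \<sigma> (r k) *\<^sub>R p (r k))" by (simp add: algebra_simps)
  have u2: "u \<in> frechet_normal_cone S (x + T (r k) *\<^sub>R (d + \<sigma> (r k) *\<^sub>R p (r k)))" using u1 unfolding eq .
  have t1: "0 < T (r k)" and t2: "T (r k) < \<eta>" using Tpos k3 by auto
  have dd: "norm ((d + \<sigma> (r k) *\<^sub>R p (r k)) - d) < \<epsilon>" using k2 by (simp add: dist_norm)
  show ?thesis
    by (intro exI[of _ "T (r k)"] exI[of _ "d + \<sigma> (r k) *\<^sub>R p (r k)"] exI[of _ u] conjI t1 t2 dd uv u2)
qed


lemma dir_char:
  fixes S :: "'a::euclidean_space set"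
  assumes H: "\<forall>\<epsilon>>0. \<forall>\<eta>>0. \<exists>t d' u. 0 < t \<and> t < \<eta> \<and> norm (d' - d) < \<epsilon> \<and> norm (u - v) < \<epsilon> \<and>
     u \<in> frechet_normal_cone S (x + t *\<^sub>R d')"
  shows "v \<in> directional_normal_cone S x d"
proof -
  define Q where "Q = (\<lambda>k (z :: real \<times> 'a \<times> 'a). 0 < fst z \<and> fst z < 1 / real (Suc k) \<and>
      norm (fst (snd z) - d) < 1 / real (Suc k) \<and> norm (snd (snd z) - v) < 1 / real (Suc k) \<and>
      snd (snd z) \<in> frechet_normal_cone S (x + fst z *\<^sub>R fst (snd z)))"
  have "\<forall>k. \<exists>z. Q k z"
  proof
    fix k
    have k0: "1 / real (Suc k) > 0" by simp
    obtain t d' u where "0 < t \<and> t < 1 / real (Suc k) \<and> norm (d' - d) < 1 / real (Suc k) \<and>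
      norm (u - v) < 1 / real (Suc k) \<and> u \<in> frechet_normal_cone S (x + t *\<^sub>R d')"
      using H[rule_format, OF k0 k0] by blast
    hence "Q k (t, d', u)" unfolding Q_def by simp
    thus "\<exists>z. Q k z" ..
  qed
  then obtain f where f: "\<forall>k. Q k (f k)" using choice[of Q] by blast
  define t where "t k = fst (f k)" for k
  define dk where "dk k = fst (snd (f k))" for k
  define vk where "vk k = snd (snd (f k))" for k
  have h: "0 < t k \<and> t k < 1 / real (Suc k) \<and> norm (dk k - d) < 1 / real (Suc k) \<and>
      norm (vk k - v) < 1 / real (Suc k) \<and> vk k \<in> frechet_normal_cone S (x + t k *\<^sub>R dk k)" for k
    using f unfolding Q_def t_def dk_def vk_def by blast
  have "norm (t n) < 1 / real (Suc n)" for n using h[of n] by simp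
  hence t0: "t \<longlonglongrightarrow> 0" by (rule LIMSEQ_norm_0)
  have "(\<lambda>k. dk k - d) \<longlonglongrightarrow> 0" by (rule LIMSEQ_norm_0) (use h in blast)
  hence dd: "dk \<longlonglongrightarrow> d" by (rule LIM_zero_cancel)
  have "(\<lambda>k. vk k - v) \<longlonglongrightarrow> 0" by (rule LIMSEQ_norm_0) (use h in blast)
  hence vv: "vk \<longlonglongrightarrow> v" by (rule LIM_zero_cancel)
  show ?thesis unfolding directional_normal_cone_def using h t0 dd vv by blast
qed

lemma gen_main:
  fixes S :: "'a::euclidean_space set"
  assumes S: "closed S" and G: "goodG G"
  shows "limiting_normal_cone (gen_set S x d G) w \<subseteq> directional_normal_cone S x d"
proof
  fix v assume "v \<in> limiting_normal_cone (gen_set S x d G) w"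
  then obtain xk vk where hk: "\<forall>k. xk k \<in> gen_set S x d G \<and> vk k \<in> frechet_normal_cone (gen_set S x d G) (xk k)"
    and vk: "vk \<longlonglongrightarrow> v"
    unfolding limiting_normal_cone_def by blast
  show "v \<in> directional_normal_cone S x d"
  proof (rule dir_char, intro allI impI)
    fix \<epsilon> \<eta> :: real assume eps: "\<epsilon> > 0" and eta: "\<eta> > 0"
    have e2: "\<epsilon>/2 > 0" using eps by simp
    obtain N where N: "\<forall>n\<ge>N. dist (vk n) v < \<epsilon>/2"
      using vk[unfolded tendsto_iff, rule_format, OF e2] unfolding eventually_sequentially by blast
    obtain t d' u where tu: "0 < t" "t < \<eta>" "norm (d' - d) < \<epsilon>/2" "norm (u - vk N) < \<epsilon>/2"
      "u \<in> frechet_normal_cone S (x + t *\<^sub>R d')"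
    proof -
      have fN: "vk N \<in> frechet_normal_cone (gen_set S x d G) (xk N)" using hk by blast
      show ?thesis using approx[OF S G fN e2 eta] that by blast
    qed
    have "norm (u - v) \<le> norm (u - vk N) + norm (vk N - v)"
      using norm_triangle_ineq[of "u - vk N" "vk N - v"] by simp
    moreover have "norm (vk N - v) < \<epsilon>/2" using N by (simp add: dist_norm)
    ultimately have "norm (u - v) < \<epsilon>" using tu(4) by simp
    moreover have "norm (d' - d) < \<epsilon>" using tu(3) eps by simp
    ultimately show "\<exists>t d' u. 0 < t \<and> t < \<eta> \<and> norm (d' - d) < \<epsilon> \<and> norm (u - v) < \<epsilon> \<and>
       u \<in> frechet_normal_cone S (x + t *\<^sub>R d')"
      by (intro exI[of _ t] exI[of _ d'] exI[of _ u] conjI tu(1,2,5))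
  qed
qed

definition G2 :: "((nat \<Rightarrow> real) \<times> (nat \<Rightarrow> real)) set" where
  "G2 = {(t, \<lambda>k. t k / 2) | t. (\<forall>k. t k > 0) \<and> t \<longlonglongrightarrow> 0}"

definition G3 :: "((nat \<Rightarrow> real) \<times> (nat \<Rightarrow> real)) set" where
  "G3 = {(t, \<lambda>k. \<rho> k / 2) | t \<rho>. (\<forall>k. t k > 0 \<and> \<rho> k > 0) \<and> t \<longlonglongrightarrow> 0 \<and> \<rho> \<longlonglongrightarrow> 0
      \<and> (\<lambda>k. t k / \<rho> k) \<longlonglongrightarrow> 0}"

lemma G2_mem: "(t, s) \<in> G2 \<longleftrightarrow> s = (\<lambda>k. t k / 2) \<and> (\<forall>k. t k > 0) \<and> t \<longlonglongrightarrow> 0"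
  unfolding G2_def by auto

lemma G3_mem: "(t, s) \<in> G3 \<longleftrightarrow> (\<exists>\<rho>. s = (\<lambda>k. \<rho> k / 2) \<and> (\<forall>k. t k > 0 \<and> \<rho> k > 0) \<and>
    t \<longlonglongrightarrow> 0 \<and> \<rho> \<longlonglongrightarrow> 0 \<and> (\<lambda>k. t k / \<rho> k) \<longlonglongrightarrow> 0)"
  unfolding G3_def by auto

lemma goodG2: "goodG G2"
proof -
  have A: "(\<forall>k. t k > 0 \<and> s k > 0) \<and> t \<longlonglongrightarrow> 0 \<and> s \<longlonglongrightarrow> 0" if h: "(t, s) \<in> G2" for t s
  proof -
    have e: "s = (\<lambda>k. t k / 2)" and p: "\<forall>k. t k > 0" and l: "t \<longlonglongrightarrow> 0"
      using h unfolding G2_mem by auto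
    have "(\<lambda>k. t k / 2) \<longlonglongrightarrow> 0 / 2" by (intro tendsto_intros l) simp
    thus ?thesis using e p l by simp
  qed
  have B: "(t \<circ> r, s \<circ> r) \<in> G2" if h: "(t, s) \<in> G2" and rm: "strict_mono r" for t s and r :: "nat \<Rightarrow> nat"
  proof -
    have e: "s = (\<lambda>k. t k / 2)" and p: "\<forall>k. t k > 0" and l: "t \<longlonglongrightarrow> 0"
      using h unfolding G2_mem by auto
    have "(t \<circ> r) \<longlonglongrightarrow> 0" by (rule LIMSEQ_subseq_LIMSEQ[OF l rm])
    moreover have "\<forall>k. (t \<circ> r) k > 0" using p by simp
    moreover have "s \<circ> r = (\<lambda>k. (t \<circ> r) k / 2)" using e by (simp add: comp_def)
    ultimately show ?thesis unfolding G2_mem by blast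
  qed
  show ?thesis unfolding goodG_def using A B by blast
qed

lemma goodG3: "goodG G3"
proof -
  have A: "(\<forall>k. t k > 0 \<and> s k > 0) \<and> t \<longlonglongrightarrow> 0 \<and> s \<longlonglongrightarrow> 0" if h: "(t, s) \<in> G3" for t s
  proof -
    obtain \<rho> where e: "s = (\<lambda>k. \<rho> k / 2)" and p: "\<forall>k. t k > 0 \<and> \<rho> k > 0"
      and l: "t \<longlonglongrightarrow> 0" "\<rho> \<longlonglongrightarrow> 0"
      using h unfolding G3_mem by blast
    have "(\<lambda>k. \<rho> k / 2) \<longlonglongrightarrow> 0 / 2" by (intro tendsto_intros l) simp
    thus ?thesis using e p l by simp
  qed
  have B: "(t \<circ> r, s \<circ> r) \<in> G3" if h: "(t, s) \<in> G3" and rm: "strict_mono r" for t s and r :: "nat \<Rightarrow> nat"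
  proof -
    obtain \<rho> where e: "s = (\<lambda>k. \<rho> k / 2)" and p: "\<forall>k. t k > 0 \<and> \<rho> k > 0"
      and l: "t \<longlonglongrightarrow> 0" "\<rho> \<longlonglongrightarrow> 0" "(\<lambda>k. t k / \<rho> k) \<longlonglongrightarrow> 0"
      using h unfolding G3_mem by blast
    have "(t \<circ> r) \<longlonglongrightarrow> 0" by (rule LIMSEQ_subseq_LIMSEQ[OF l(1) rm])
    moreover have "(\<rho> \<circ> r) \<longlonglongrightarrow> 0" by (rule LIMSEQ_subseq_LIMSEQ[OF l(2) rm])
    moreover have "((\<lambda>k. t k / \<rho> k) \<circ> r) \<longlonglongrightarrow> 0" by (rule LIMSEQ_subseq_LIMSEQ[OF l(3) rm])
    hence "(\<lambda>k. (t \<circ> r) k / (\<rho> \<circ> r) k) \<longlonglongrightarrow> 0" by (simp add: comp_def)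
    moreover have "\<forall>k. (t \<circ> r) k > 0 \<and> (\<rho> \<circ> r) k > 0" using p by simp
    moreover have "s \<circ> r = (\<lambda>k. (\<rho> \<circ> r) k / 2)" using e by (simp add: comp_def)
    ultimately show ?thesis unfolding G3_mem by blast
  qed
  show ?thesis unfolding goodG_def using A B by blast
qed

lemma T2_eq: "second_tangent_set S x d = gen_set S x d G2"
proof (intro set_eqI iffI)
  fix w assume "w \<in> second_tangent_set S x d"
  then obtain t wk where h: "\<forall>k. t k > 0" "t \<longlonglongrightarrow> 0" "wk \<longlonglongrightarrow> w"
    "\<forall>k. x + t k *\<^sub>R d + ((1/2) * (t k)\<^sup>2) *\<^sub>R wk k \<in> S"
    unfolding second_tangent_set_def by blast
  have eq: "t k * (t k / 2) = (1/2) * (t k)\<^sup>2" for k by (simp add: power2_eq_square)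
  have "(t, \<lambda>k. t k / 2) \<in> G2" unfolding G2_mem using h by blast
  moreover have "\<forall>k. x + t k *\<^sub>R d + (t k * (t k / 2)) *\<^sub>R wk k \<in> S" using h(4) unfolding eq .
  ultimately show "w \<in> gen_set S x d G2" unfolding gen_set_def using h(3) by blast
next
  fix w assume "w \<in> gen_set S x d G2"
  then obtain t s wk where h: "(t, s) \<in> G2" "wk \<longlonglongrightarrow> w" "\<forall>k. x + t k *\<^sub>R d + (t k * s k) *\<^sub>R wk k \<in> S"
    unfolding gen_set_def by blast
  have e: "s = (\<lambda>k. t k / 2)" and p: "\<forall>k. t k > 0" and l: "t \<longlonglongrightarrow> 0"
    using h(1) unfolding G2_mem by auto
  have eq: "t k * (t k / 2) = (1/2) * (t k)\<^sup>2" for k by (simp add: power2_eq_square)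
  have "\<forall>k. x + t k *\<^sub>R d + ((1/2) * (t k)\<^sup>2) *\<^sub>R wk k \<in> S" using h(3) unfolding e eq .
  thus "w \<in> second_tangent_set S x d" unfolding second_tangent_set_def using p l h(2) by blast
qed

lemma T3_eq: "asymptotic_second_tangent_cone S x d = gen_set S x d G3"
proof (intro set_eqI iffI)
  fix w assume "w \<in> asymptotic_second_tangent_cone S x d"
  then obtain t \<rho> wk where h: "\<forall>k. t k > 0 \<and> \<rho> k > 0" "t \<longlonglongrightarrow> 0" "\<rho> \<longlonglongrightarrow> 0" "wk \<longlonglongrightarrow> w"
    "(\<lambda>k. t k / \<rho> k) \<longlonglongrightarrow> 0"
    "\<forall>k. x + t k *\<^sub>R d + ((1/2) * t k * \<rho> k) *\<^sub>R wk k \<in> S"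
    unfolding asymptotic_second_tangent_cone_def by blast
  have eq: "t k * (\<rho> k / 2) = (1/2) * t k * \<rho> k" for k by simp
  have "(t, \<lambda>k. \<rho> k / 2) \<in> G3" unfolding G3_mem
    by (intro exI[of _ \<rho>] conjI refl h(1,2,3,5))
  moreover have "\<forall>k. x + t k *\<^sub>R d + (t k * (\<rho> k / 2)) *\<^sub>R wk k \<in> S" using h(6) unfolding eq .
  ultimately show "w \<in> gen_set S x d G3" unfolding gen_set_def using h(4) by blast
next
  fix w assume "w \<in> gen_set S x d G3"
  then obtain t s wk where h: "(t, s) \<in> G3" "wk \<longlonglongrightarrow> w" "\<forall>k. x + t k *\<^sub>R d + (t k * s k) *\<^sub>R wk k \<in> S"
    unfolding gen_set_def by blast
  obtain \<rho> where e: "s = (\<lambda>k. \<rho> k / 2)" and p: "\<forall>k. t k > 0 \<and> \<rho> k > 0"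
    and l: "t \<longlonglongrightarrow> 0" "\<rho> \<longlonglongrightarrow> 0" "(\<lambda>k. t k / \<rho> k) \<longlonglongrightarrow> 0"
    using h(1) unfolding G3_mem by blast
  have eq: "t k * (\<rho> k / 2) = (1/2) * t k * \<rho> k" for k by simp
  have mm: "\<forall>k. x + t k *\<^sub>R d + ((1/2) * t k * \<rho> k) *\<^sub>R wk k \<in> S" using h(3) unfolding e eq .
  show "w \<in> asymptotic_second_tangent_cone S x d"
    unfolding asymptotic_second_tangent_cone_def
    by (intro CollectI exI[of _ t] exI[of _ \<rho>] exI[of _ wk] conjI p l h(2) mm)
qed

theorem lemma2p4:
  fixes S :: "'a::euclidean_space set" and x d :: 'a
  assumes "closed S" and "x \<in> S" and "d \<in> tangent_cone S x"
  shows "(\<forall>w\<in>second_tangent_set S x d.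
            limiting_normal_cone (second_tangent_set S x d) w \<subseteq> directional_normal_cone S x d)
       \<and> (\<forall>w\<in>asymptotic_second_tangent_cone S x d.
            limiting_normal_cone (asymptotic_second_tangent_cone S x d) w \<subseteq> directional_normal_cone S x d)"
  unfolding T2_eq T3_eq using gen_main[OF assms(1) goodG2] gen_main[OF assms(1) goodG3] by blast

end
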